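(* Suppose $(n,w)$ is an instance of TSP with $w:E_n\to[-1,1]$ and $w[K_n]=d\binom n2$ for some $d\in[0,1]$, and let $H$ be a directed Hamilton cycle of $K_n$ whose vertices in order are $v_0,v_1,\dots,v_{n-1}$. Writing $w_H^+(v_i):=\sum_{i+1\le j\le n-1}|w(v_iv_j)|$, we have $$\sum_{i=1}^{n-2}\frac{w_H^+(v_{i-1})}{n-i}\le \sqrt d\,n+2.$$
   Context: $K_n=(V_n,E_n)$ is the complete graph on $n$ vertices and $w[K_n]=\sum_{e\in E_n}|w(e)|$. *)

theory Defs
  imports Complex_Main
begin

definition Kn_edges :: "nat \<Rightarrow> nat set set" where
  "Kn_edges n = {e. e \<subseteq> {0..<n} \<and> card e = 2}"

definition total_abs_weight :: "nat \<Rightarrow> (nat set \<Rightarrow> real) \<Rightarrow> real" where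
  "total_abs_weight n w = (\<Sum>e\<in>Kn_edges n. \<bar>w e\<bar>)"

text \<open>A directed Hamilton cycle of K_n with vertices v_0, ..., v_(n-1) in order is
  given by a bijection v of {0..<n} onto V_n.\<close>
definition ham_order :: "nat \<Rightarrow> (nat \<Rightarrow> nat) \<Rightarrow> bool" where
  "ham_order n v \<longleftrightarrow> bij_betw v {0..<n} {0..<n}"

definition w_plus :: "nat \<Rightarrow> (nat set \<Rightarrow> real) \<Rightarrow> (nat \<Rightarrow> nat) \<Rightarrow> nat \<Rightarrow> real" where
  "w_plus n w v i = (\<Sum>j\<in>{i+1..<n}. \<bar>w {v i, v j}\<bar>)"

end

theory Submission
  imports Defs
begin

lemma pt_bound:
  fixes a k m :: real
  assumes "0 \<le> a" "a \<le> k" "0 < k" "0 < m"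
  shows "a / k \<le> a / m + (if k < m then (m - k) / m else 0)"
proof (cases "k < m")
  case True
  have "a / k - a / m = a * (m - k) / (k * m)" using assms by (simp add: field_simps)
  also have "\<dots> \<le> k * (m - k) / (k * m)"
    using assms True by (intro divide_right_mono mult_right_mono) auto
  also have "\<dots> = (m - k) / m" using assms by simp
  finally show ?thesis using True by simp
next
  case False
  then have "a / k \<le> a / m" using assms by (intro divide_left_mono) auto
  then show ?thesis using False by simp
qed

lemma edge_count:
  assumes ham: "ham_order n v"
  shows "(\<Sum>i<n. w_plus n w v i) = total_abs_weight n w"
proof -
  have bij: "bij_betw v {0..<n} {0..<n}" using ham by (simp add: ham_order_def)
  have inj: "inj_on v {0..<n}" using bij bij_betw_def by blast
  have vinj: "\<And>a b. a < n \<Longrightarrow> b < n \<Longrightarrow> v a = v b \<Longrightarrow> a = b"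
    using inj by (auto dest: inj_onD)
  define S where "S = Sigma {..<n} (\<lambda>i. {i+1..<n})"
  define g where "g = (\<lambda>(i::nat, j::nat). {v i, v j})"
  have ginj: "inj_on g S"
  proof (rule inj_onI)
    fix p q assume p: "p \<in> S" and q: "q \<in> S" and e: "g p = g q"
    obtain i j where pij: "p = (i, j)" by (cases p)
    obtain i' j' where qij: "q = (i', j')" by (cases q)
    have r: "i < j" "j < n" "i' < j'" "j' < n" using p q pij qij S_def by auto
    have ne: "v i \<noteq> v j" using vinj[of i j] r by auto
    have e2: "{v i, v j} = {v i', v j'}" using e pij qij g_def by simp
    show "p = q"
    proof (cases "v i = v i'")
      case True
      then have "v j = v j'" using e2 ne by (metis doubleton_eq_iff)
      then have "i = i'" "j = j'" using True vinj r by auto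
      then show ?thesis using pij qij by simp
    next
      case False
      then have "v i = v j'" "v j = v i'" using e2 by (metis doubleton_eq_iff)+
      then have "i = j'" "j = i'" using vinj r by auto
      then show ?thesis using r by simp
    qed
  qed
  have gim: "g ` S = Kn_edges n"
  proof
    show "g ` S \<subseteq> Kn_edges n"
    proof
      fix e assume "e \<in> g ` S"
      then obtain p where p: "p \<in> S" "e = g p" by blast
      obtain i j where pij: "p = (i, j)" by (cases p)
      have r: "i < j" "j < n" using p pij S_def by auto
      have e: "e = {v i, v j}" using p pij g_def by simp
      have "v i \<noteq> v j" using vinj[of i j] r by auto
      moreover have "v i < n" "v j < n" using bij r bij_betw_apply by fastforce+
      ultimately show "e \<in> Kn_edges n" unfolding Kn_edges_def e by auto
    qed
  next
    show "Kn_edges n \<subseteq> g ` S"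
    proof
      fix e assume "e \<in> Kn_edges n"
      then have sub: "e \<subseteq> {0..<n}" and c: "card e = 2" unfolding Kn_edges_def by auto
      obtain x y where e: "e = {x, y}" and xy: "x \<noteq> y"
        using c unfolding card_2_iff by blast
      have "x \<in> v ` {0..<n}" "y \<in> v ` {0..<n}" using bij sub e bij_betw_imp_surj_on by blast+
      then obtain i j where ij: "i < n" "j < n" "x = v i" "y = v j" by auto
      have "i \<noteq> j" using xy ij by auto
      then show "e \<in> g ` S"
      proof (cases "i < j")
        case True
        then have "(i, j) \<in> S" using ij S_def by auto
        then show ?thesis using e ij g_def by force
      next
        case False
        then have "(j, i) \<in> S" using ij \<open>i \<noteq> j\<close> S_def by auto
        moreover have "e = g (j, i)" using e ij g_def by auto
        ultimately show ?thesis by blast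
      qed
    qed
  qed
  have "(\<Sum>i<n. w_plus n w v i) = (\<Sum>p\<in>S. \<bar>w (g p)\<bar>)"
    unfolding w_plus_def S_def g_def by (simp add: sum.Sigma split_def)
  also have "\<dots> = (\<Sum>e\<in>g ` S. \<bar>w e\<bar>)"
    using ginj by (simp add: sum.reindex)
  also have "\<dots> = total_abs_weight n w" unfolding total_abs_weight_def gim ..
  finally show ?thesis .
qed

lemma w_plus_bounds:
  assumes ham: "ham_order n v" and w_range: "\<forall>e\<in>Kn_edges n. -1 \<le> w e \<and> w e \<le> 1"
    and i: "i < n"
  shows "0 \<le> w_plus n w v i" "w_plus n w v i \<le> real n - real i - 1"
proof -
  show "0 \<le> w_plus n w v i" unfolding w_plus_def by (simp add: sum_nonneg)
  have bij: "bij_betw v {0..<n} {0..<n}" using ham by (simp add: ham_order_def)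
  have inj: "inj_on v {0..<n}" using bij bij_betw_def by blast
  have vinj: "\<And>a b. a < n \<Longrightarrow> b < n \<Longrightarrow> v a = v b \<Longrightarrow> a = b"
    using inj by (auto dest: inj_onD)
  have "\<And>j. j \<in> {i+1..<n} \<Longrightarrow> \<bar>w {v i, v j}\<bar> \<le> 1"
  proof -
    fix j assume j: "j \<in> {i+1..<n}"
    have "v i \<noteq> v j" using vinj[of i j] i j by auto
    moreover have "v i < n" "v j < n" using bij i j bij_betw_apply by fastforce+
    ultimately have "{v i, v j} \<in> Kn_edges n" unfolding Kn_edges_def by auto
    then show "\<bar>w {v i, v j}\<bar> \<le> 1" using w_range by auto
  qed
  then have "w_plus n w v i \<le> (\<Sum>j\<in>{i+1..<n}. 1)" unfolding w_plus_def by (intro sum_mono) auto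
  also have "\<dots> = real n - real i - 1" using i by simp
  finally show "w_plus n w v i \<le> real n - real i - 1" .
qed

lemma gauss_real: "(\<Sum>k\<in>{1..<m}. (real m - real k)) = real m * (real m - 1) / 2"
proof (induction m)
  case 0 then show ?case by simp
next
  case (Suc m)
  show ?case
  proof (cases "m = 0")
    case True then show ?thesis by simp
  next
    case False
    have "{1..<Suc m} = insert m {1..<m}" using False by auto
    then have "(\<Sum>k\<in>{1..<Suc m}. (real (Suc m) - real k)) = 1 + (\<Sum>k\<in>{1..<m}. (real m - real k + 1))"
      by (simp add: algebra_simps)
    also have "\<dots> = 1 + real m * (real m - 1) / 2 + (real m - 1)"
      using Suc.IH False by (simp add: sum.distrib)
    also have "\<dots> = real (Suc m) * (real (Suc m) - 1) / 2" by (simp add: field_simps)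
    finally show ?thesis .
  qed
qed


theorem proposition4p4:
  fixes n :: nat and w :: "nat set \<Rightarrow> real" and d :: real and v :: "nat \<Rightarrow> nat"
  assumes w_range: "\<forall>e\<in>Kn_edges n. -1 \<le> w e \<and> w e \<le> 1"
    and d_range: "0 \<le> d" "d \<le> 1"
    and total: "total_abs_weight n w = d * real (n choose 2)"
    and ham: "ham_order n v"
  shows "(\<Sum>i\<in>{1..n-2}. w_plus n w v (i - 1) / (real n - real i)) \<le> sqrt d * real n + 2"
proof -
  define D where "D = d * real (n choose 2)"
  have D0: "0 \<le> D" unfolding D_def using d_range(1) by (intro mult_nonneg_nonneg) auto
  define s where "s = sqrt (2 * D)"
  have s0: "0 \<le> s" unfolding s_def using D0 by simp
  have ss: "s * s = 2 * D" unfolding s_def using D0 by (simp add: real_sqrt_mult_self)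
  define m where "m = max 1 (nat \<lceil>s\<rceil>)"
  define M where "M = real m"
  have M1: "1 \<le> M" unfolding M_def m_def by simp
  have sM: "s \<le> M"
  proof -
    have "real (nat \<lceil>s\<rceil>) = real_of_int \<lceil>s\<rceil>" using s0 by simp
    moreover have "real (nat \<lceil>s\<rceil>) \<le> M" unfolding M_def m_def by simp
    ultimately show ?thesis using le_of_int_ceiling[of s] by linarith
  qed
  have Ms: "M - 1 \<le> s"
  proof (cases "\<lceil>s\<rceil> \<ge> 1")
    case True
    then have "(1::nat) \<le> nat \<lceil>s\<rceil>" by arith
    then have "m = nat \<lceil>s\<rceil>" unfolding m_def by (simp only: max_def) simp
    then have "M = real_of_int \<lceil>s\<rceil>" unfolding M_def using True by simp
    then show ?thesis using ceiling_correct[of s] by linarith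
  next
    case False
    then have "M = 1" unfolding M_def m_def by simp
    then show ?thesis using s0 by simp
  qed
  define a where "a = (\<lambda>i. w_plus n w v (i - 1))"
  define f where "f = (\<lambda>k::real. if k < M then (M - k) / M else 0)"
  have f0: "\<And>k. 0 \<le> f k" unfolding f_def using M1 by auto
  have step1: "(\<Sum>i\<in>{1..n-2}. a i / (real n - real i)) \<le> (\<Sum>i\<in>{1..n-2}. a i / M + f (real n - real i))"
  proof (rule sum_mono)
    fix i assume i: "i \<in> {1..n-2}"
    then have i1: "i - 1 < n" "1 \<le> i" "i < n" by auto
    have "0 \<le> a i" "a i \<le> real n - real (i - 1) - 1"
      using w_plus_bounds[OF ham w_range i1(1)] unfolding a_def by auto
    moreover have "real n - real (i - 1) - 1 = real n - real i" using i1 by (simp add: of_nat_diff)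
    ultimately show "a i / (real n - real i) \<le> a i / M + f (real n - real i)"
      unfolding f_def using pt_bound[of "a i" "real n - real i" M] M1 i1 by auto
  qed
  have sa: "(\<Sum>i\<in>{1..n-2}. a i) \<le> D"
  proof -
    have inj: "inj_on (\<lambda>i. i - 1) {1..n-2}" by (auto simp: inj_on_def)
    have "(\<Sum>i\<in>{1..n-2}. a i) = (\<Sum>j\<in>(\<lambda>i. i - 1) ` {1..n-2}. w_plus n w v j)"
      unfolding a_def using sum.reindex[OF inj, of "w_plus n w v"] by simp
    also have "\<dots> \<le> (\<Sum>j<n. w_plus n w v j)"
    proof (rule sum_mono2)
      show "(\<lambda>i. i - 1) ` {1..n-2} \<subseteq> {..<n}" by auto
      show "\<And>b. b \<in> {..<n} - (\<lambda>i. i - 1) ` {1..n - 2} \<Longrightarrow> 0 \<le> w_plus n w v b"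
        using w_plus_bounds(1)[OF ham w_range] by auto
    qed simp
    also have "\<dots> = D" using edge_count[OF ham] total D_def by simp
    finally show ?thesis .
  qed
  have step2: "(\<Sum>i\<in>{1..n-2}. a i / M) \<le> D / M"
    using sa M1 by (simp add: sum_divide_distrib[symmetric] divide_right_mono)
  have step3: "(\<Sum>i\<in>{1..n-2}. f (real n - real i)) \<le> (M - 1) / 2"
  proof -
    have "(\<Sum>i\<in>{1..n-2}. f (real n - real i)) \<le> (\<Sum>i\<in>{1..<n}. f (real n - real i))"
      by (rule sum_mono2) (auto simp: f0)
    also have "\<dots> = (\<Sum>k\<in>{1..<n}. f (real k))"
      by (subst sum.atLeastLessThan_rev) (auto intro!: sum.cong simp: of_nat_diff)
    also have "\<dots> = (\<Sum>k\<in>{k\<in>{1..<n}. k < m}. (M - real k) / M)"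
      by (subst sum.inter_filter) (auto simp: f_def M_def intro!: sum.cong)
    also have "\<dots> \<le> (\<Sum>k\<in>{1..<m}. (M - real k) / M)"
      by (rule sum_mono2) (auto simp: M_def)
    also have "\<dots> = (\<Sum>k\<in>{1..<m}. (real m - real k)) / M"
      by (simp add: sum_divide_distrib M_def)
    also have "\<dots> = (M - 1) / 2" using gauss_real[of m] M1 unfolding M_def by simp
    finally show ?thesis .
  qed
  have DM: "D / M \<le> s / 2"
  proof -
    have "D = s * s / 2" using ss by simp
    also have "\<dots> \<le> s * M / 2" using s0 sM by (simp add: mult_left_mono)
    finally show ?thesis using M1 by (simp add: field_simps)
  qed
  have "(\<Sum>i\<in>{1..n-2}. w_plus n w v (i - 1) / (real n - real i))
      = (\<Sum>i\<in>{1..n-2}. a i / (real n - real i))" unfolding a_def ..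
  also have "\<dots> \<le> (\<Sum>i\<in>{1..n-2}. a i / M) + (\<Sum>i\<in>{1..n-2}. f (real n - real i))"
    using step1 by (simp add: sum.distrib)
  also have "\<dots> \<le> D / M + (M - 1) / 2" using step2 step3 by linarith
  also have "\<dots> \<le> s"
  proof -
    have "(M - 1) / 2 \<le> s / 2" using Ms by (simp add: divide_right_mono)
    then show ?thesis using DM by linarith
  qed
  also have "s \<le> sqrt d * real n"
  proof -
    have "2 * real (n choose 2) \<le> real n * real n"
    proof -
      have "2 * (n choose 2) \<le> n * n" 
      proof -
        have "2 * (n * (n - 1) div 2) \<le> n * (n - 1)" by simp
        also have "\<dots> \<le> n * n" by simp
        finally show ?thesis unfolding choose_two .
      qed
      then have "real (2 * (n choose 2)) \<le> real (n * n)" by (simp only: of_nat_le_iff)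
      then show ?thesis by simp
    qed
    then have "d * (2 * real (n choose 2)) \<le> d * (real n * real n)"
      using d_range(1) by (rule mult_left_mono)
    then have "2 * D \<le> d * (real n * real n)" unfolding D_def by (simp add: algebra_simps)
    then have "s \<le> sqrt (d * (real n * real n))" unfolding s_def by (rule real_sqrt_le_mono)
    also have "\<dots> = sqrt d * real n" by (simp add: real_sqrt_mult)
    finally show ?thesis .
  qed
  finally show ?thesis by linarith
qed

end
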